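(* Let $n,k,d$ be integers with $1\le k\le d<n$, let $\alpha>0$, and for each integer $M\ge0$ put $n_M=n+M$, $k_M=k+M$, $d_M=d+M$, $\gamma_{MSR}=\frac{d_M\alpha}{d_M-k_M+1}$ and $\gamma_{MBR}=\alpha$. Let $s\in[0,1]$ be fixed. Then $$\lim_{M\to\infty}\frac{C^{\mathrm{exact}}_{n_M,k_M,d_M}\big(\alpha,\,s\gamma_{MSR}+(1-s)\gamma_{MBR}\big)}{C_{k_M,d_M}\big(\alpha,\,s\gamma_{MSR}+(1-s)\gamma_{MBR}\big)}=1.$$
   Context: A distributed storage system (DSS) with parameters $(n,k,d)$ stores a file across $n$ nodes, each storing an amount $\alpha$ of information (e.g. $\alpha$ symbols over a finite field, where symbols may be split into arbitrarily many sub-symbols), such that the file can be reconstructed from the contents of any $k$ nodes, and any lost node can be repaired by contacting any $d$ of the remaining nodes, each of which transmits an amount $\beta$ to the replacement node, for a total repair bandwidth $\gamma=d\beta$. Repair is exact: the replacement node stores exactly the same content as the lost node. $C^{\mathrm{exact}}_{n,k,d}(\alpha,\gamma)$ denotes the maximum size of a file that can be stored by such an exact-repair DSS with $n$ nodes, node size $\alpha$ and total repair bandwidth $\gamma$. Also $C_{k,d}(\alpha,\gamma)=\sum_{j=0}^{k-1}\min\{\alpha,\frac{d-j}{d}\gamma\}$ (the functional-repair capacity). *)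

theory Defs
  imports Complex_Main
begin

text \<open>Nodes are 0..n-1. The file is an element
 x of {0..<F}; node i stores f i x, an element of {0..<A}. When node j is lost and the helper
 set H (d nodes other than j) is contacted, helper i sends g i j H w (an element of {0..<B})
 computed from its own content w only.\<close>

definition exact_repair_code ::
  "nat \<Rightarrow> nat \<Rightarrow> nat \<Rightarrow> nat \<Rightarrow> nat \<Rightarrow> nat \<Rightarrow>
   (nat \<Rightarrow> nat \<Rightarrow> nat) \<Rightarrow> (nat \<Rightarrow> nat \<Rightarrow> nat set \<Rightarrow> nat \<Rightarrow> nat) \<Rightarrow> bool" where
  "exact_repair_code n k d F A B f g \<longleftrightarrow>
     (\<forall>i<n. \<forall>x<F. f i x < A) \<and>
     (\<forall>i<n. \<forall>j<n. \<forall>H. \<forall>w<A. g i j H w < B) \<and>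
     (\<forall>K. K \<subseteq> {..<n} \<and> card K = k \<longrightarrow>
        (\<forall>x<F. \<forall>y<F. (\<forall>i\<in>K. f i x = f i y) \<longrightarrow> x = y)) \<and>
     (\<forall>j<n. \<forall>H. H \<subseteq> {..<n} - {j} \<and> card H = d \<longrightarrow>
        (\<forall>x<F. \<forall>y<F. (\<forall>i\<in>H. g i j H (f i x) = g i j H (f i y)) \<longrightarrow> f j x = f j y))"

text \<open>File size S is achievable with node size alpha and total repair bandwidth gamma if some
 exact-repair code, measured in an arbitrary information unit t > 0 (allowing arbitrary
 sub-symbolization), has node size log A \<le> alpha t, per-helper bandwidth
 log B \<le> (gamma/d) t, and file size log F = S t.\<close>

definition exact_achievable :: "nat \<Rightarrow> nat \<Rightarrow> nat \<Rightarrow> real \<Rightarrow> real \<Rightarrow> real \<Rightarrow> bool" where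
  "exact_achievable n k d \<alpha> \<gamma> S \<longleftrightarrow>
     (\<exists>F A B f g t. t > 0 \<and> exact_repair_code n k d F A B f g \<and>
        ln (real A) \<le> \<alpha> * t \<and> real d * ln (real B) \<le> \<gamma> * t \<and>
        S = ln (real F) / t)"

definition C_exact :: "nat \<Rightarrow> nat \<Rightarrow> nat \<Rightarrow> real \<Rightarrow> real \<Rightarrow> real" where
  "C_exact n k d \<alpha> \<gamma> = Sup {S. exact_achievable n k d \<alpha> \<gamma> S}"

definition C_func :: "nat \<Rightarrow> nat \<Rightarrow> real \<Rightarrow> real \<Rightarrow> real" where
  "C_func k d \<alpha> \<gamma> = (\<Sum>j<k. min \<alpha> ((real d - real j) / real d * \<gamma>))"

end

theory Submission
  imports Defs "HOL-Library.FuncSet" "HOL-Computational_Algebra.Polynomial"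
begin


lemma poly_unique:
  fixes c c' :: "nat \<Rightarrow> int" and P :: "int set"
  assumes fin: "finite P" and cardP: "m \<le> card P"
    and eq: "\<And>x. x \<in> P \<Longrightarrow> (\<Sum>a<m. c a * x ^ a) = (\<Sum>a<m. c' a * x ^ a)"
  shows "\<forall>a<m. c a = c' a"
proof -
  define p where "p = (\<Sum>a<m. monom (c a - c' a) a)"
  have pv: "poly p x = (\<Sum>a<m. c a * x ^ a) - (\<Sum>a<m. c' a * x ^ a)" for x
    by (simp add: p_def poly_sum poly_monom sum_subtractf[symmetric] algebra_simps)
  have cp: "coeff p b = (if b < m then c b - c' b else 0)" for b
    by (simp add: p_def coeff_sum coeff_monom)
  have "p = 0"
  proof (rule ccontr)
    assume ne: "p \<noteq> 0"
    have "P \<subseteq> {x. poly p x = 0}" using eq pv by auto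
    hence "card P \<le> card {x. poly p x = 0}"
      by (intro card_mono poly_roots_finite ne)
    also have "\<dots> \<le> degree p" by (rule card_poly_roots_bound[OF ne])
    finally have "m \<le> degree p" using cardP by simp
    moreover have "coeff p (degree p) \<noteq> 0" using ne by simp
    ultimately show False using cp by (simp)
  qed
  thus ?thesis using cp by (metis coeff_0 eq_iff_diff_eq_0)
qed



lemma cutset_count:
  assumes code: "exact_repair_code n k d F A B f g" and kd: "k \<le> d" and dn: "d < n"
  shows "F \<le> (\<Prod>j<k. min A (B ^ (d - j)))"
proof -
  define X where "X = {..<F}"
  define T where "T m x = (\<lambda>i. if i < m then f i x else 0)" for m x
  note C = code[unfolded exact_repair_code_def]
  have fA: "\<And>i x. i < n \<Longrightarrow> x < F \<Longrightarrow> f i x < A" using conjunct1[OF C] by blast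
  have gB: "\<And>i j H w. i < n \<Longrightarrow> j < n \<Longrightarrow> w < A \<Longrightarrow> g i j H w < B" using conjunct1[OF conjunct2[OF C]] by blast
  have rec: "\<And>K x y. K \<subseteq> {..<n} \<Longrightarrow> card K = k \<Longrightarrow> x < F \<Longrightarrow> y < F \<Longrightarrow> (\<forall>i\<in>K. f i x = f i y) \<Longrightarrow> x = y"
    using conjunct1[OF conjunct2[OF conjunct2[OF C]]] by blast
  have rep: "\<And>j H x y. j < n \<Longrightarrow> H \<subseteq> {..<n} - {j} \<Longrightarrow> card H = d \<Longrightarrow> x < F \<Longrightarrow> y < F \<Longrightarrow>
      (\<forall>i\<in>H. g i j H (f i x) = g i j H (f i y)) \<Longrightarrow> f j x = f j y"
    using conjunct2[OF conjunct2[OF conjunct2[OF C]]] by blast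
  have main: "m \<le> k \<Longrightarrow> card (T m ` X) \<le> (\<Prod>j<m. min A (B ^ (d - j)))" for m
  proof (induction m)
    case 0
    have "T 0 ` X \<subseteq> {\<lambda>_. 0}" by (auto simp: T_def)
    hence "card (T 0 ` X) \<le> card {\<lambda>_::nat. 0::nat}" by (intro card_mono) auto
    thus ?case by simp
  next
    case (Suc m)
    hence mk: "m < k" and IH: "card (T m ` X) \<le> (\<Prod>j<m. min A (B ^ (d - j)))" by auto
    have fin: "finite (T m ` X)" by (simp add: X_def)
    have TS: "T (Suc m) x = (T m x)(m := f m x)" for x by (auto simp: T_def)
    have b1: "card (T (Suc m) ` X) \<le> card (T m ` X) * A"
    proof -
      have "T (Suc m) ` X \<subseteq> (\<lambda>(a,v). a(m:=v)) ` (T m ` X \<times> {..<A})"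
      proof
        fix z assume "z \<in> T (Suc m) ` X"
        then obtain x where x: "x \<in> X" "z = T (Suc m) x" by auto
        have "f m x < A" using fA[of m x] x mk kd dn by (simp add: X_def)
        thus "z \<in> (\<lambda>(a,v). a(m:=v)) ` (T m ` X \<times> {..<A})"
          using x TS by (auto intro!: image_eqI[where x="(T m x, f m x)"])
      qed
      hence "card (T (Suc m) ` X) \<le> card ((\<lambda>(a,v). a(m:=v)) ` (T m ` X \<times> {..<A}))"
        by (intro card_mono finite_imageI) (auto simp: fin)
      also have "\<dots> \<le> card (T m ` X \<times> {..<A})" by (rule card_image_le) (simp add: fin)
      finally show ?thesis by (simp add: card_cartesian_product)
    qed
    define H where "H = {..d} - {m}"
    define I where "I = {m<..d}"
    define msg where "msg x = (\<lambda>h\<in>I. g h m H (f h x))" for x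
    define \<Phi> where "\<Phi> a w = f m (SOME y. y \<in> X \<and> T m y = a \<and> msg y = w)" for a w
    have Hsub: "H \<subseteq> {..<n} - {m}" using dn by (auto simp: H_def)
    have Hcard: "card H = d" using mk kd by (simp add: H_def)
    have phi: "x \<in> X \<Longrightarrow> f m x = \<Phi> (T m x) (msg x)" for x
    proof -
      assume x: "x \<in> X"
      have ex: "\<exists>y. y \<in> X \<and> T m y = T m x \<and> msg y = msg x" using x by blast
      define y where "y = (SOME y. y \<in> X \<and> T m y = T m x \<and> msg y = msg x)"
      have y: "y \<in> X" "T m y = T m x" "msg y = msg x" using someI_ex[OF ex] unfolding y_def by auto
      have "f m x = f m y"
      proof (rule rep[OF _ Hsub Hcard])
        show "m < n" using mk kd dn by simp
        show "x < F" "y < F" using x y by (auto simp: X_def)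
        show "\<forall>i\<in>H. g i m H (f i x) = g i m H (f i y)"
        proof
          fix i assume i: "i \<in> H"
          show "g i m H (f i x) = g i m H (f i y)"
          proof (cases "i < m")
            case True
            have "T m y i = T m x i" using y by simp
            thus ?thesis using True by (simp add: T_def)
          next
            case False
            hence "i \<in> I" using i by (auto simp: H_def I_def)
            have "msg y i = msg x i" using y by simp
            thus ?thesis using \<open>i \<in> I\<close> by (simp add: msg_def)
          qed
        qed
      qed
      thus ?thesis unfolding \<Phi>_def y_def by simp
    qed
    have b2: "card (T (Suc m) ` X) \<le> card (T m ` X) * B ^ (d - m)"
    proof -
      have mem: "x \<in> X \<Longrightarrow> msg x \<in> (\<Pi>\<^sub>E h\<in>I. {..<B})" for x
        using gB fA dn by (auto simp: msg_def I_def X_def)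
      have "T (Suc m) ` X \<subseteq> (\<lambda>(a,w). a(m:=\<Phi> a w)) ` (T m ` X \<times> (\<Pi>\<^sub>E h\<in>I. {..<B}))"
      proof
        fix z assume "z \<in> T (Suc m) ` X"
        then obtain x where x: "x \<in> X" "z = T (Suc m) x" by auto
        thus "z \<in> (\<lambda>(a,w). a(m:=\<Phi> a w)) ` (T m ` X \<times> (\<Pi>\<^sub>E h\<in>I. {..<B}))"
          using TS phi[OF x(1)] mem[OF x(1)] by (auto intro!: image_eqI[where x="(T m x, msg x)"])
      qed
      hence "card (T (Suc m) ` X) \<le> card ((\<lambda>(a,w). a(m:=\<Phi> a w)) ` (T m ` X \<times> (\<Pi>\<^sub>E h\<in>I. {..<B})))"
        by (intro card_mono finite_imageI finite_cartesian_product finite_PiE) (auto simp: fin I_def X_def)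
      also have "\<dots> \<le> card (T m ` X \<times> (\<Pi>\<^sub>E h\<in>I. {..<B}))"
        by (rule card_image_le) (auto simp: fin I_def intro!: finite_PiE)
      also have "\<dots> = card (T m ` X) * B ^ (d - m)"
        by (simp add: card_cartesian_product card_PiE I_def)
      finally show ?thesis .
    qed
    have "card (T (Suc m) ` X) \<le> card (T m ` X) * min A (B ^ (d - m))"
      using b1 b2 by (simp add: min_def)
    also have "\<dots> \<le> (\<Prod>j<m. min A (B ^ (d - j))) * min A (B ^ (d - m))"
      using IH by simp
    finally show ?case by simp
  qed
  have inj: "inj_on (T k) X"
  proof
    fix x y assume xy: "x \<in> X" "y \<in> X" "T k x = T k y"
    show "x = y"
    proof (rule rec[of "{..<k}"])
      show "{..<k} \<subseteq> {..<n}" using kd dn by auto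
      show "\<forall>i\<in>{..<k}. f i x = f i y"
      proof
        fix i assume "i \<in> {..<k}"
        moreover have "T k x i = T k y i" using xy by simp
        ultimately show "f i x = f i y" by (simp add: T_def)
      qed
    qed (use xy in \<open>auto simp: X_def\<close>)
  qed
  have "F = card (T k ` X)" using card_image[OF inj] by (simp add: X_def)
  thus ?thesis using main[of k] by simp
qed

lemma achievable_le:
  assumes kd: "k \<le> d" and dn: "d < n" and k1: "1 \<le> k" and a0: "\<alpha> \<ge> 0" and g0: "\<gamma> \<ge> 0"
    and ach: "exact_achievable n k d \<alpha> \<gamma> S"
  shows "S \<le> C_func k d \<alpha> \<gamma>"
proof -
  obtain F A B f g t where t: "t > 0" and code: "exact_repair_code n k d F A B f g"
    and lA: "ln (real A) \<le> \<alpha> * t" and lB: "real d * ln (real B) \<le> \<gamma> * t"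
    and S: "S = ln (real F) / t"
    using ach unfolding exact_achievable_def by blast
  have Cnn: "C_func k d \<alpha> \<gamma> \<ge> 0" unfolding C_func_def
    using a0 g0 kd by (intro sum_nonneg) (auto intro!: mult_nonneg_nonneg divide_nonneg_nonneg)
  show ?thesis
  proof (cases "F = 0")
    case True thus ?thesis using S Cnn by simp
  next
    case False
    note C = code[unfolded exact_repair_code_def]
    have "f 0 0 < A" using conjunct1[OF C] False dn by auto
    hence Apos: "A > 0" by simp
    have "g 0 0 {} 0 < B" using conjunct1[OF conjunct2[OF C]] Apos dn by auto
    hence Bpos: "B > 0" by simp
    have d0: "d > 0" using kd k1 by simp
    have Fle: "real F \<le> (\<Prod>j<k. real (min A (B ^ (d - j))))"
      using cutset_count[OF code kd dn] by (metis of_nat_le_iff of_nat_prod)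
    have pos: "\<And>j. real (min A (B ^ (d - j))) > 0" using Apos Bpos by simp
    have "ln (real F) \<le> ln (\<Prod>j<k. real (min A (B ^ (d - j))))"
      using Fle False pos by (subst ln_le_cancel_iff) (auto intro: prod_pos)
    also have "\<dots> = (\<Sum>j<k. ln (real (min A (B ^ (d - j)))))"
      using pos by (subst ln_prod) (auto simp: less_imp_neq[symmetric])
    also have "\<dots> \<le> (\<Sum>j<k. t * min \<alpha> ((real d - real j) / real d * \<gamma>))"
    proof (rule sum_mono)
      fix j assume j: "j \<in> {..<k}"
      have l1: "ln (real (min A (B ^ (d - j)))) \<le> ln (real A)"
        using pos[of j] by (subst ln_le_cancel_iff) auto
      have "ln (real (min A (B ^ (d - j)))) \<le> ln (real (B ^ (d - j)))"
        using pos[of j] by (subst ln_le_cancel_iff) auto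
      also have "\<dots> = real (d - j) * ln (real B)" by (simp add: ln_realpow)
      also have "\<dots> = (real d - real j) / real d * (real d * ln (real B))"
        using d0 j kd by (simp add: of_nat_diff)
      also have "\<dots> \<le> (real d - real j) / real d * (\<gamma> * t)"
        using lB j kd by (intro mult_left_mono) auto
      finally have l2: "ln (real (min A (B ^ (d - j)))) \<le> t * ((real d - real j) / real d * \<gamma>)"
        by (simp add: algebra_simps)
      show "ln (real (min A (B ^ (d - j)))) \<le> t * min \<alpha> ((real d - real j) / real d * \<gamma>)"
        using l1 lA l2 t by (simp add: min_mult_distrib_left algebra_simps)
    qed
    also have "\<dots> = t * C_func k d \<alpha> \<gamma>" by (simp add: C_func_def sum_distrib_left)
    finally show ?thesis using S t by (simp add: divide_le_eq mult.commute)
  qed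
qed

lemma zero_achievable:
  assumes "\<alpha> \<ge> 0" "\<gamma> \<ge> 0"
  shows "exact_achievable n k d \<alpha> \<gamma> 0"
proof -
  have "exact_repair_code n k d 1 1 1 (\<lambda>_ _. 0) (\<lambda>_ _ _ _. 0)"
    unfolding exact_repair_code_def by auto
  thus ?thesis unfolding exact_achievable_def using assms
    by (intro exI[of _ "1::nat"] exI[of _ "\<lambda>_ _. 0::nat"] exI[of _ "\<lambda>_ _ _ _. 0::nat"] exI[of _ "1::real"]) auto
qed

lemma C_exact_le:
  assumes "k \<le> d" "d < n" "1 \<le> k" "\<alpha> \<ge> 0" "\<gamma> \<ge> 0"
  shows "C_exact n k d \<alpha> \<gamma> \<le> C_func k d \<alpha> \<gamma>"
  unfolding C_exact_def
  using zero_achievable[OF assms(4,5)] achievable_le[OF assms]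
  by (intro cSup_least) auto

lemma C_exact_ge:
  assumes "k \<le> d" "d < n" "1 \<le> k" "\<alpha> \<ge> 0" "\<gamma> \<ge> 0" "exact_achievable n k d \<alpha> \<gamma> S"
  shows "S \<le> C_exact n k d \<alpha> \<gamma>"
  unfolding C_exact_def
  using achievable_le[OF assms(1-5)] assms(6)
  by (intro cSup_upper) (auto simp: bdd_above_def)



lemma transfer:
  fixes X :: "'x set" and Y :: "nat \<Rightarrow> 'y set" and Z :: "nat \<Rightarrow> nat \<Rightarrow> nat set \<Rightarrow> 'z set"
  assumes finX: "finite X" and finY: "\<And>i. finite (Y i)" and finZ: "\<And>i j H. finite (Z i j H)"
    and cY: "\<And>i. card (Y i) \<le> A" and cZ: "\<And>i j H. card (Z i j H) \<le> B" and B1: "B \<ge> 1"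
    and fY: "\<And>i x. i < n \<Longrightarrow> x \<in> X \<Longrightarrow> f i x \<in> Y i"
    and gZ: "\<And>i j H w. i < n \<Longrightarrow> j < n \<Longrightarrow> w \<in> Y i \<Longrightarrow> g i j H w \<in> Z i j H"
    and recon: "\<And>K x y. K \<subseteq> {..<n} \<Longrightarrow> card K = k \<Longrightarrow> x \<in> X \<Longrightarrow> y \<in> X \<Longrightarrow> (\<forall>i\<in>K. f i x = f i y) \<Longrightarrow> x = y"
    and repair: "\<And>j H x y. j < n \<Longrightarrow> H \<subseteq> {..<n} - {j} \<Longrightarrow> card H = d \<Longrightarrow> x \<in> X \<Longrightarrow> y \<in> X \<Longrightarrow>
        (\<forall>i\<in>H. g i j H (f i x) = g i j H (f i y)) \<Longrightarrow> f j x = f j y"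
  shows "\<exists>f' g'. exact_repair_code n k d (card X) A B f' g'"
proof -
  obtain dx where dx: "bij_betw dx {0..<card X} X" using ex_bij_betw_nat_finite[OF finX] by blast
  have ex1: "\<exists>e. e ` Y i \<subseteq> {..<A} \<and> inj_on e (Y i)" for i
    using card_le_inj[of "Y i" "{..<A}"] finY cY by auto
  define e where "e i = (SOME e. e ` Y i \<subseteq> {..<A} \<and> inj_on e (Y i))" for i
  have e: "e i ` Y i \<subseteq> {..<A}" "inj_on (e i) (Y i)" for i
    using someI_ex[OF ex1[of i]] unfolding e_def by auto
  have ex2: "\<exists>e. e ` Z i j H \<subseteq> {..<B} \<and> inj_on e (Z i j H)" for i j H
    using card_le_inj[of "Z i j H" "{..<B}"] finZ cZ by auto
  define ez where "ez = (\<lambda>(i,j,H). (SOME e. e ` Z i j H \<subseteq> {..<B} \<and> inj_on e (Z i j H)))"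
  have ez': "ez (i,j,H) ` Z i j H \<subseteq> {..<B}" "inj_on (ez (i,j,H)) (Z i j H)" for i j H
    using someI_ex[OF ex2[of i j H]] unfolding ez_def by auto
  define f' where "f' i m = e i (f i (dx m))" for i m
  define g' where "g' i j H w = (if w \<in> e i ` Y i then ez (i,j,H) (g i j H (inv_into (Y i) (e i) w)) else 0)" for i j H w
  have dxX: "m < card X \<Longrightarrow> dx m \<in> X" for m using dx by (auto simp: bij_betw_def)
  have g'f': "i < n \<Longrightarrow> m < card X \<Longrightarrow> g' i j H (f' i m) = ez (i,j,H) (g i j H (f i (dx m)))" for i j H m
    using fY[OF _ dxX] e(2) by (auto simp: g'_def f'_def inv_into_f_f)
  show ?thesis
  proof (intro exI[of _ f'] exI[of _ g'], unfold exact_repair_code_def, intro conjI allI impI ballI)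
    fix i x assume "i < n" "x < card X"
    hence "f i (dx x) \<in> Y i" using fY dxX by blast
    thus "f' i x < A" using e(1)[of i] by (auto simp: f'_def)
  next
    fix i j H w assume ij: "i < n" "j < n" "w < A"
    show "g' i j H w < B"
    proof (cases "w \<in> e i ` Y i")
      case True
      hence "inv_into (Y i) (e i) w \<in> Y i" by (auto intro: inv_into_into)
      hence "g i j H (inv_into (Y i) (e i) w) \<in> Z i j H" using gZ ij by auto
      hence "ez (i,j,H) (g i j H (inv_into (Y i) (e i) w)) < B" using ez'(1)[of i j H] by blast
      thus ?thesis using True by (simp add: g'_def)
    next
      case False thus ?thesis using B1 by (simp add: g'_def)
    qed
  next
    fix K x y assume K: "K \<subseteq> {..<n} \<and> card K = k" and xy: "x < card X" "y < card X"
      and eq: "\<forall>i\<in>K. f' i x = f' i y"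
    have "\<forall>i\<in>K. f i (dx x) = f i (dx y)"
    proof
      fix i assume i: "i \<in> K"
      hence "i < n" using K by auto
      thus "f i (dx x) = f i (dx y)"
        using eq i e(2)[of i] fY[OF _ dxX[OF xy(1)]] fY[OF _ dxX[OF xy(2)]]
        by (auto simp: f'_def inj_on_def)
    qed
    hence "dx x = dx y" using recon[of K] K dxX xy by blast
    thus "x = y" using dx xy by (auto simp: bij_betw_def inj_on_def)
  next
    fix j H x y assume j: "j < n" and H: "H \<subseteq> {..<n} - {j} \<and> card H = d" and xy: "x < card X" "y < card X"
      and eq: "\<forall>i\<in>H. g' i j H (f' i x) = g' i j H (f' i y)"
    have "\<forall>i\<in>H. g i j H (f i (dx x)) = g i j H (f i (dx y))"
    proof
      fix i assume i: "i \<in> H"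
      hence "i < n" using H by auto
      thus "g i j H (f i (dx x)) = g i j H (f i (dx y))"
        using eq i g'f'[OF _ xy(1)] g'f'[OF _ xy(2)] ez'(2)[of i j H]
          gZ[OF _ j fY[OF _ dxX[OF xy(1)]]] gZ[OF _ j fY[OF _ dxX[OF xy(2)]]]
        by (auto simp: inj_on_def)
    qed
    hence "f j (dx x) = f j (dx y)" using repair[of j H] j H dxX xy by blast
    thus "f' j x = f' j y" by (simp add: f'_def)
  qed
qed



definition abs_code :: "nat \<Rightarrow> nat \<Rightarrow> nat \<Rightarrow> 'x set \<Rightarrow> (nat \<Rightarrow> 'y set) \<Rightarrow> (nat \<Rightarrow> nat \<Rightarrow> nat set \<Rightarrow> 'z set)
   \<Rightarrow> (nat \<Rightarrow> 'x \<Rightarrow> 'y) \<Rightarrow> (nat \<Rightarrow> nat \<Rightarrow> nat set \<Rightarrow> 'y \<Rightarrow> 'z) \<Rightarrow> bool" where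
  "abs_code n k d X Y Z f g \<longleftrightarrow> finite X \<and> (\<forall>i. finite (Y i)) \<and> (\<forall>i j H. finite (Z i j H)) \<and>
    (\<forall>i x. i < n \<longrightarrow> x \<in> X \<longrightarrow> f i x \<in> Y i) \<and>
    (\<forall>i j H w. i < n \<longrightarrow> j < n \<longrightarrow> w \<in> Y i \<longrightarrow> g i j H w \<in> Z i j H) \<and>
    (\<forall>K x y. K \<subseteq> {..<n} \<longrightarrow> card K = k \<longrightarrow> x \<in> X \<longrightarrow> y \<in> X \<longrightarrow> (\<forall>i\<in>K. f i x = f i y) \<longrightarrow> x = y) \<and>
    (\<forall>j H x y. j < n \<longrightarrow> H \<subseteq> {..<n} - {j} \<longrightarrow> card H = d \<longrightarrow> x \<in> X \<longrightarrow> y \<in> X \<longrightarrow>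
        (\<forall>i\<in>H. g i j H (f i x) = g i j H (f i y)) \<longrightarrow> f j x = f j y)"

lemma abs_codeD:
  assumes "abs_code n k d X Y Z f g"
  shows "finite X" "\<And>i. finite (Y i)" "\<And>i j H. finite (Z i j H)"
    "\<And>i x. i < n \<Longrightarrow> x \<in> X \<Longrightarrow> f i x \<in> Y i"
    "\<And>i j H w. i < n \<Longrightarrow> j < n \<Longrightarrow> w \<in> Y i \<Longrightarrow> g i j H w \<in> Z i j H"
    "\<And>K x y. K \<subseteq> {..<n} \<Longrightarrow> card K = k \<Longrightarrow> x \<in> X \<Longrightarrow> y \<in> X \<Longrightarrow> (\<forall>i\<in>K. f i x = f i y) \<Longrightarrow> x = y"
    "\<And>j H x y. j < n \<Longrightarrow> H \<subseteq> {..<n} - {j} \<Longrightarrow> card H = d \<Longrightarrow> x \<in> X \<Longrightarrow> y \<in> X \<Longrightarrow>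
        (\<forall>i\<in>H. g i j H (f i x) = g i j H (f i y)) \<Longrightarrow> f j x = f j y"
proof -
  note C = assms[unfolded abs_code_def]
  note C1 = conjunct2[OF conjunct2[OF conjunct2[OF C]]]
  note C2 = conjunct2[OF conjunct2[OF C1]]
  show "finite X" using conjunct1[OF C] by blast
  show "\<And>i. finite (Y i)" using conjunct1[OF conjunct2[OF C]] by blast
  show "\<And>i j H. finite (Z i j H)" using conjunct1[OF conjunct2[OF conjunct2[OF C]]] by blast
  show "\<And>i x. i < n \<Longrightarrow> x \<in> X \<Longrightarrow> f i x \<in> Y i" using conjunct1[OF C1] by blast
  show "\<And>i j H w. i < n \<Longrightarrow> j < n \<Longrightarrow> w \<in> Y i \<Longrightarrow> g i j H w \<in> Z i j H" using conjunct1[OF conjunct2[OF C1]] by blast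
  show "\<And>K x y. K \<subseteq> {..<n} \<Longrightarrow> card K = k \<Longrightarrow> x \<in> X \<Longrightarrow> y \<in> X \<Longrightarrow> (\<forall>i\<in>K. f i x = f i y) \<Longrightarrow> x = y"
    using conjunct1[OF C2] by blast
  show "\<And>j H x y. j < n \<Longrightarrow> H \<subseteq> {..<n} - {j} \<Longrightarrow> card H = d \<Longrightarrow> x \<in> X \<Longrightarrow> y \<in> X \<Longrightarrow>
        (\<forall>i\<in>H. g i j H (f i x) = g i j H (f i y)) \<Longrightarrow> f j x = f j y"
    using conjunct2[OF C2] by blast
qed

lemma achievable_family:
  assumes a: "\<alpha> > 0" and Au: "Au > 0" and W: "W \<ge> 2" and ineq: "real d * real Bu * \<alpha> \<le> \<gamma> * real Au"
    and q: "q \<ge> 1" and code: "abs_code n k d X Y Z f g" and cX: "card X = q ^ Fu"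
    and cY: "\<And>i. card (Y i) \<le> (q*W) ^ Au" and cZ: "\<And>i j H. card (Z i j H) \<le> (q*W) ^ Bu"
  shows "exact_achievable n k d \<alpha> \<gamma> (\<alpha> * real Fu * ln (real q) / (real Au * ln (real (q*W))))"
proof -
  have "1 * W \<le> q * W" using q by (rule mult_le_mono1)
  hence qW: "q * W \<ge> 2" using W by linarith
  have "\<exists>f' g'. exact_repair_code n k d (card X) ((q*W)^Au) ((q*W)^Bu) f' g'"
  proof (rule transfer[where Y=Y and Z=Z and f=f and g=g, OF abs_codeD(1-3)[OF code] cY cZ _ abs_codeD(4-7)[OF code]])
    show "1 \<le> (q*W)^Bu" using q W by (intro one_le_power) simp
  qed auto
  then obtain f' g' where c: "exact_repair_code n k d (q^Fu) ((q*W)^Au) ((q*W)^Bu) f' g'" using cX by auto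
  define L where "L = ln (real (q*W))"
  have "1 < q*W" using qW by simp
  hence "(1::real) < real (q*W)" by (metis of_nat_1 of_nat_less_iff)
  hence L: "L > 0" unfolding L_def by (rule ln_gt_zero)
  define t where "t = real Au * L / \<alpha>"
  have t: "t > 0" using Au L a by (simp add: t_def)
  have "ln (real ((q*W)^Au)) = \<alpha> * t" using a by (simp add: t_def L_def ln_realpow)
  moreover have "real d * ln (real ((q*W)^Bu)) \<le> \<gamma> * t"
  proof -
    have "real d * ln (real ((q*W)^Bu)) = (real d * real Bu * \<alpha>) * L / \<alpha>"
      using a by (simp add: L_def ln_realpow)
    also have "\<dots> \<le> (\<gamma> * real Au) * L / \<alpha>"
      using ineq L a by (intro divide_right_mono mult_right_mono) auto
    finally show ?thesis by (simp add: t_def)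
  qed
  moreover have "\<alpha> * real Fu * ln (real q) / (real Au * ln (real (q*W))) = ln (real (q^Fu)) / t"
    using a by (simp add: t_def L_def ln_realpow)
  ultimately show ?thesis unfolding exact_achievable_def
    by (intro exI[of _ "q^Fu"] exI[of _ "(q*W)^Au"] exI[of _ "(q*W)^Bu"] exI[of _ f'] exI[of _ g'] exI[of _ t])
      (use c t in simp)
qed

lemma lower_from_family:
  assumes kd: "k \<le> d" and dn: "d < n" and k1: "1 \<le> k" and a: "\<alpha> > 0" and g: "\<gamma> \<ge> 0"
    and Au: "Au > 0" and W: "W \<ge> 2" and ineq: "real d * real Bu * \<alpha> \<le> \<gamma> * real Au"
    and fam: "\<And>q. q \<ge> 2 \<Longrightarrow> \<exists>(X::'x set) (Y::nat \<Rightarrow> 'y set) (Z::nat \<Rightarrow> nat \<Rightarrow> nat set \<Rightarrow> 'z set) f g.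
        abs_code n k d X Y Z f g \<and> card X = q ^ Fu \<and> (\<forall>i. card (Y i) \<le> (q*W) ^ Au) \<and>
        (\<forall>i j H. card (Z i j H) \<le> (q*W) ^ Bu)"
  shows "\<alpha> * real Fu / real Au \<le> C_exact n k d \<alpha> \<gamma>"
proof -
  define c where "c = \<alpha> * real Fu / real Au"
  define C where "C = C_exact n k d \<alpha> \<gamma>"
  have c0: "c \<ge> 0" using a by (simp add: c_def)
  have bnd: "c * real m / real (Suc m) \<le> C" if m: "m \<ge> 1" for m
  proof -
    have "W ^ 1 \<le> W ^ m" using W m by (intro power_increasing) auto
    hence q2: "W ^ m \<ge> 2" using W by simp
    obtain X :: "'x set" and Y :: "nat \<Rightarrow> 'y set" and Z :: "nat \<Rightarrow> nat \<Rightarrow> nat set \<Rightarrow> 'z set" and f g where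
      cd: "abs_code n k d X Y Z f g" "card X = (W^m) ^ Fu" "\<forall>i. card (Y i) \<le> (W^m*W) ^ Au"
        "\<forall>i j H. card (Z i j H) \<le> (W^m*W) ^ Bu"
      using fam[OF q2] by blast
    have "exact_achievable n k d \<alpha> \<gamma> (\<alpha> * real Fu * ln (real (W^m)) / (real Au * ln (real (W^m*W))))"
      using q2 cd by (intro achievable_family[OF a Au W ineq]) auto
    hence le: "\<alpha> * real Fu * ln (real (W^m)) / (real Au * ln (real (W^m*W))) \<le> C"
      unfolding C_def using C_exact_ge[OF kd dn k1 less_imp_le[OF a] g] by blast
    have lW: "ln (real W) > 0" using W by simp
    have "W^m * W = W ^ Suc m" by simp
    hence "\<alpha> * real Fu * ln (real (W^m)) / (real Au * ln (real (W^m*W)))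
        = \<alpha> * real Fu * (real m * ln (real W)) / (real Au * (real (Suc m) * ln (real W)))"
      by (simp only: of_nat_power ln_realpow)
    also have "\<dots> = c * real m / real (Suc m)" using lW Au by (simp add: c_def divide_simps del: of_nat_Suc)
    finally show ?thesis using le by simp
  qed
  show ?thesis
  proof (rule ccontr)
    assume "\<not> ?thesis"
    hence lt: "C < c" by (simp add: c_def C_def)
    obtain m :: nat where m: "c / (c - C) < real m" using reals_Archimedean2 by blast
    have "c / (c - C) \<ge> 0" using lt c0 by simp
    hence m1: "m \<ge> 1" using m by (cases m) auto
    have "c < (c - C) * real m" using m lt by (simp add: pos_divide_less_eq mult.commute)
    moreover have "(c - C) * real (Suc m) = (c - C) * real m + (c - C)" by (simp add: algebra_simps)
    ultimately have "c < (c - C) * real (Suc m)" using lt by linarith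
    hence "C < c * real m / real (Suc m)" by (simp add: field_simps)
    thus False using bnd[OF m1] by simp
  qed
qed



lemma sum_pow_bound:
  fixes c :: "nat \<Rightarrow> int" and x Q :: int
  assumes c: "\<And>a. a < m \<Longrightarrow> 0 \<le> c a \<and> c a < Q" and Q: "Q > 0" and x: "0 \<le> x" "x \<le> int Xb"
  shows "0 \<le> (\<Sum>a<m. c a * x ^ a) \<and> (\<Sum>a<m. c a * x ^ a) < Q * ((int m + 1) * (int Xb + 1) ^ m)"
proof
  show "0 \<le> (\<Sum>a<m. c a * x ^ a)" using c x by (intro sum_nonneg) auto
  have P: "(int Xb + 1) ^ m > 0" by simp
  have "(\<Sum>a<m. c a * x ^ a) \<le> (\<Sum>a<m. Q * (int Xb + 1) ^ m)"
  proof (rule sum_mono)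
    fix a assume a: "a \<in> {..<m}"
    have "x ^ a \<le> (int Xb + 1) ^ a" using x by (intro power_mono) auto
    also have "\<dots> \<le> (int Xb + 1) ^ m" using a by (intro power_increasing) auto
    finally have xa: "x ^ a \<le> (int Xb + 1) ^ m" .
    have "c a * x ^ a \<le> c a * (int Xb + 1) ^ m" using c[of a] a xa by (intro mult_left_mono) auto
    also have "\<dots> \<le> Q * (int Xb + 1) ^ m" using c[of a] a P by (intro mult_right_mono) auto
    finally show "c a * x ^ a \<le> Q * (int Xb + 1) ^ m" .
  qed
  also have "\<dots> = int m * (Q * (int Xb + 1) ^ m)" by simp
  also have "\<dots> < (int m + 1) * (Q * (int Xb + 1) ^ m)" using Q P by simp
  finally show "(\<Sum>a<m. c a * x ^ a) < Q * ((int m + 1) * (int Xb + 1) ^ m)" by (simp add: algebra_simps)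
qed

lemma card_xp: "card ((\<lambda>i::nat. int i + 1) ` S) = card S"
  by (rule card_image) (auto simp: inj_on_def)

lemma finite_xp: "finite S \<Longrightarrow> finite ((\<lambda>i::nat. int i + 1) ` S)" by simp

lemma abs_codeI:
  assumes "finite X" "\<And>i. finite (Y i)" "\<And>i j H. finite (Z i j H)"
    "\<And>i x. i < n \<Longrightarrow> x \<in> X \<Longrightarrow> f i x \<in> Y i"
    "\<And>i j H w. i < n \<Longrightarrow> j < n \<Longrightarrow> w \<in> Y i \<Longrightarrow> g i j H w \<in> Z i j H"
    "\<And>K x y. K \<subseteq> {..<n} \<Longrightarrow> card K = k \<Longrightarrow> x \<in> X \<Longrightarrow> y \<in> X \<Longrightarrow> (\<forall>i\<in>K. f i x = f i y) \<Longrightarrow> x = y"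
    "\<And>j H x y. j < n \<Longrightarrow> H \<subseteq> {..<n} - {j} \<Longrightarrow> card H = d \<Longrightarrow> x \<in> X \<Longrightarrow> y \<in> X \<Longrightarrow>
        (\<forall>i\<in>H. g i j H (f i x) = g i j H (f i y)) \<Longrightarrow> f j x = f j y"
  shows "abs_code n k d X Y Z f g"
  unfolding abs_code_def
  apply (intro conjI allI impI)
        apply (rule assms(1))
       apply (rule assms(2))
      apply (rule assms(3))
     apply (rule assms(4), assumption+)
    apply (rule assms(5), assumption+)
   apply (rule assms(6), assumption+)
  apply (rule assms(7), assumption+)
  done

lemma mbr_family:
  assumes K1: "1 \<le> K" and KD: "K \<le> D" and DN: "D < N"
  shows "\<exists>(X::(nat\<times>nat \<Rightarrow> int) set) (Y::nat \<Rightarrow> (nat \<Rightarrow> int) set) (Z::nat \<Rightarrow> nat \<Rightarrow> nat set \<Rightarrow> int set) f g.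
        abs_code N K D X Y Z f g \<and> card X = q ^ (\<Sum>j<K. D - j) \<and>
        (\<forall>i. card (Y i) \<le> (q * ((D+1)*(N+1)^D)^2) ^ D) \<and>
        (\<forall>i j H. card (Z i j H) \<le> (q * ((D+1)*(N+1)^D)^2) ^ 1)"
proof (cases "q = 0")
  case True
  define X :: "(nat\<times>nat \<Rightarrow> int) set" where "X = {}"
  have "abs_code N K D X (\<lambda>_. {}) (\<lambda>_ _ _. {}) (\<lambda>_ _. undefined) (\<lambda>_ _ _ _. undefined)"
    by (simp add: abs_code_def X_def)
  moreover have "card X = q ^ (\<Sum>j<K. D - j)"
  proof -
    have "(\<Sum>j<K. D - j) > 0" using K1 KD by (intro sum_pos2[of _ 0]) auto
    thus ?thesis using True by (simp add: X_def)
  qed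
  ultimately show ?thesis by fastforce
next
  case False
  hence q: "q \<ge> 1" by simp
  define W1 where "W1 = (D+1)*(N+1)^D"
  define W where "W = W1^2"
  have "0 < W1" unfolding W1_def by simp
  hence W1pos: "W1 \<ge> 1" by simp
  define I where "I = {(a,b). a \<le> b \<and> a < K \<and> b < D}"
  define X :: "(nat\<times>nat \<Rightarrow> int) set" where "X = (\<Pi>\<^sub>E p\<in>I. {0..<int q})"
  define Ms :: "(nat\<times>nat \<Rightarrow> int) \<Rightarrow> nat \<Rightarrow> nat \<Rightarrow> int" where
    "Ms v a b = (if (min a b, max a b) \<in> I then v (min a b, max a b) else 0)" for v a b
  define xp :: "nat \<Rightarrow> int" where "xp i = int i + 1" for i
  define f :: "nat \<Rightarrow> (nat\<times>nat \<Rightarrow> int) \<Rightarrow> (nat \<Rightarrow> int)" where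
    "f i v = (\<lambda>b\<in>{..<D}. \<Sum>a<D. Ms v a b * xp i ^ a)" for i v
  define g :: "nat \<Rightarrow> nat \<Rightarrow> nat set \<Rightarrow> (nat \<Rightarrow> int) \<Rightarrow> int" where
    "g h j H w = (\<Sum>b<D. w b * xp j ^ b)" for h j H w
  define Y :: "nat \<Rightarrow> (nat \<Rightarrow> int) set" where "Y i = (\<Pi>\<^sub>E b\<in>{..<D}. {0..<int (q*W1)})" for i
  define Z :: "nat \<Rightarrow> nat \<Rightarrow> nat set \<Rightarrow> int set" where "Z i j H = {0..<int (q*W)}" for i j H
  have finI: "finite I"
  proof -
    have "I \<subseteq> {..<K} \<times> {..<D}" by (auto simp: I_def)
    thus ?thesis by (rule finite_subset) auto
  qed
  have Ms_sym: "Ms v a b = Ms v b a" for v a b by (simp add: Ms_def min.commute max.commute)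
  have Ms_zero: "Ms v a b = 0" if "K \<le> a" "K \<le> b" for v a b using that by (auto simp: Ms_def I_def)
  have Ms_range: "v \<in> X \<Longrightarrow> 0 \<le> Ms v a b \<and> Ms v a b < int q" for v a b
    using q by (auto simp: Ms_def X_def PiE_iff)
  have Ms_I: "(a,b) \<in> I \<Longrightarrow> Ms v a b = v (a,b)" for v a b by (auto simp: Ms_def I_def)
  have xp_range: "i < N \<Longrightarrow> 0 \<le> xp i \<and> xp i \<le> int N" for i by (simp add: xp_def)
  have eqW: "int (q*W1) = int q * ((int D + 1) * (int N + 1)^D)" by (simp add: W1_def algebra_simps)
  have node_bound: "0 \<le> (\<Sum>a<D. Ms v a b * xp i ^ a) \<and> (\<Sum>a<D. Ms v a b * xp i ^ a) < int (q*W1)"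
    if vi: "v \<in> X" "i < N" for v i b
  proof -
    have "0 \<le> (\<Sum>a<D. Ms v a b * xp i ^ a) \<and> (\<Sum>a<D. Ms v a b * xp i ^ a) < int q * ((int D + 1) * (int N + 1)^D)"
      by (rule sum_pow_bound) (use Ms_range[OF vi(1)] xp_range[OF vi(2)] q in auto)
    thus ?thesis by (simp only: eqW)
  qed
  have fY: "f i x \<in> Y i" if "i < N" "x \<in> X" for i x
    using node_bound[OF that(2,1)] by (auto simp: f_def Y_def)
  have gZ: "g i j H w \<in> Z i j H" if "i < N" "j < N" "w \<in> Y i" for i j H w
  proof -
    have "\<And>b. b < D \<Longrightarrow> 0 \<le> w b \<and> w b < int (q*W1)" using that(3) by (auto simp: Y_def PiE_iff)
    hence "0 \<le> (\<Sum>b<D. w b * xp j ^ b) \<and> (\<Sum>b<D. w b * xp j ^ b) < int (q*W1) * ((int D + 1) * (int N + 1) ^ D)"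
      using sum_pow_bound[of D w "int (q*W1)" "xp j" N] xp_range[OF that(2)] q W1pos by simp
    moreover have "int (q*W1) * ((int D + 1) * (int N + 1) ^ D) = int (q*W)"
    proof -
      have eqW1: "int W1 = (int D + 1) * (int N + 1)^D" by (simp add: W1_def algebra_simps)
      show ?thesis by (simp only: W_def power2_eq_square of_nat_mult eqW1 mult.assoc)
    qed
    ultimately have "0 \<le> (\<Sum>b<D. w b * xp j ^ b) \<and> (\<Sum>b<D. w b * xp j ^ b) < int (q*W)" by metis
    thus ?thesis unfolding g_def Z_def by simp
  qed
  have recon: "v = v'" if K: "Ks \<subseteq> {..<N}" "card Ks = K" and v: "v \<in> X" "v' \<in> X"
    and eq: "\<forall>i\<in>Ks. f i v = f i v'" for Ks v v'
  proof -
    have finKs: "finite Ks" using K(1) finite_subset by blast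
    have ev: "(\<Sum>a<D. Ms v a b * x ^ a) = (\<Sum>a<D. Ms v' a b * x ^ a)" if xK: "x \<in> xp ` Ks" and bD: "b < D" for x b
    proof -
      obtain i where i: "i \<in> Ks" "x = xp i" using xK by auto
      have "f i v b = f i v' b" using eq i by simp
      thus ?thesis using bD i by (simp add: f_def)
    qed
    have cardP: "card (xp ` Ks) = K" using K card_xp[of Ks] by (simp add: xp_def)
    have finP: "finite (xp ` Ks)" using finKs by simp
    have split: "(\<Sum>a<D. h a) = (\<Sum>a<K. h a) + (\<Sum>a\<in>{K..<D}. h a)" for h :: "nat \<Rightarrow> int"
      using KD by (simp add: lessThan_atLeast0 sum.atLeastLessThan_concat)
    have step1: "Ms v a b = Ms v' a b" if b: "K \<le> b" "b < D" and a: "a < K" for a b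
    proof -
      have "\<forall>a<K. Ms v a b = Ms v' a b"
      proof (rule poly_unique[OF finP])
        show "K \<le> card (xp ` Ks)" using cardP by simp
        fix x assume x: "x \<in> xp ` Ks"
        have z: "(\<Sum>a\<in>{K..<D}. Ms w a b * x ^ a) = 0" for w using b Ms_zero by (intro sum.neutral) auto
        show "(\<Sum>a<K. Ms v a b * x ^ a) = (\<Sum>a<K. Ms v' a b * x ^ a)"
          using ev[OF x b(2)] split[of "\<lambda>a. Ms v a b * x ^ a"] split[of "\<lambda>a. Ms v' a b * x ^ a"] z[of v] z[of v'] by simp
      qed
      thus ?thesis using a by simp
    qed
    have step2: "Ms v a b = Ms v' a b" if b: "b < K" and a: "a < K" for a b
    proof -
      have "\<forall>a<K. Ms v a b = Ms v' a b"
      proof (rule poly_unique[OF finP])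
        show "K \<le> card (xp ` Ks)" using cardP by simp
        fix x assume x: "x \<in> xp ` Ks"
        have z: "(\<Sum>a\<in>{K..<D}. Ms v a b * x ^ a) = (\<Sum>a\<in>{K..<D}. Ms v' a b * x ^ a)"
        proof (intro sum.cong refl)
          fix a assume "a \<in> {K..<D}"
          hence "Ms v b a = Ms v' b a" using step1[of a b] b by simp
          thus "Ms v a b * x ^ a = Ms v' a b * x ^ a" using Ms_sym by metis
        qed
        show "(\<Sum>a<K. Ms v a b * x ^ a) = (\<Sum>a<K. Ms v' a b * x ^ a)"
          using ev[OF x] b KD split[of "\<lambda>a. Ms v a b * x ^ a"] split[of "\<lambda>a. Ms v' a b * x ^ a"] z by simp
      qed
      thus ?thesis using a by simp
    qed
    show "v = v'"
    proof (rule extensionalityI)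
      show "v \<in> extensional I" "v' \<in> extensional I" using v by (auto simp: X_def PiE_iff)
      fix p assume p: "p \<in> I"
      obtain a b where ab: "p = (a,b)" by (cases p)
      have abI: "a \<le> b" "a < K" "b < D" using p ab by (auto simp: I_def)
      have "Ms v a b = Ms v' a b"
        using step1[of b a] step2[of b a] abI by (cases "K \<le> b") auto
      thus "v p = v' p" using Ms_I[of a b] p ab by metis
    qed
  qed
  have repair: "f j v = f j v'" if j: "j < N" and H: "H \<subseteq> {..<N} - {j}" "card H = D"
    and v: "v \<in> X" "v' \<in> X" and eq: "\<forall>i\<in>H. g i j H (f i v) = g i j H (f i v')" for j H v v'
  proof -
    have finH: "finite H" using H(1) finite_subset by blast
    define cj where "cj w a = (\<Sum>b<D. Ms w a b * xp j ^ b)" for w a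
    have gf: "g i j H (f i w) = (\<Sum>a<D. cj w a * xp i ^ a)" for i w
    proof -
      have "g i j H (f i w) = (\<Sum>b<D. (\<Sum>a<D. Ms w a b * xp i ^ a) * xp j ^ b)"
        by (simp add: g_def f_def)
      also have "\<dots> = (\<Sum>b<D. \<Sum>a<D. Ms w a b * xp i ^ a * xp j ^ b)"
        by (simp add: sum_distrib_right)
      also have "\<dots> = (\<Sum>a<D. \<Sum>b<D. Ms w a b * xp i ^ a * xp j ^ b)"
        by (rule sum.swap)
      also have "\<dots> = (\<Sum>a<D. cj w a * xp i ^ a)"
        unfolding cj_def sum_distrib_right by (intro sum.cong refl) (simp add: algebra_simps)
      finally show ?thesis .
    qed
    have "\<forall>a<D. cj v a = cj v' a"
    proof (rule poly_unique[of "xp ` H"])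
      show "finite (xp ` H)" using finH by simp
      show "D \<le> card (xp ` H)" using H card_xp[of H] by (simp add: xp_def)
      fix x assume "x \<in> xp ` H"
      then obtain i where i: "i \<in> H" "x = xp i" by auto
      have "g i j H (f i v) = g i j H (f i v')" using eq i(1) by blast
      thus "(\<Sum>a<D. cj v a * x ^ a) = (\<Sum>a<D. cj v' a * x ^ a)" using gf[of i v] gf[of i v'] i(2) by simp
    qed
    moreover have fj: "f j w = (\<lambda>b\<in>{..<D}. cj w b)" for w
      unfolding f_def cj_def
      by (rule restrict_ext, rule sum.cong, rule refl, subst Ms_sym, rule refl)
    ultimately show ?thesis unfolding fj by (intro restrict_ext) simp
  qed
  have code: "abs_code N K D X Y Z f g"
  proof (rule abs_codeI)
    show "finite X" using finI by (simp add: X_def finite_PiE)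
    show "finite (Y i)" for i by (simp add: Y_def finite_PiE)
    show "finite (Z i j H)" for i j H by (simp add: Z_def)
  qed (fact fY gZ recon repair)+
  have cI: "card I = (\<Sum>j<K. D - j)"
  proof -
    have "I = Sigma {..<K} (\<lambda>a. {a..<D})" by (auto simp: I_def)
    thus ?thesis by (simp add: card_SigmaI)
  qed
  have cX: "card X = q ^ (\<Sum>j<K. D - j)"
    using finI cI by (simp add: X_def card_PiE)
  have cY: "card (Y i) \<le> (q * W) ^ D" for i
  proof -
    have "card (Y i) = (q*W1) ^ D" by (simp add: Y_def card_PiE del: of_nat_mult)
    also have "\<dots> \<le> (q*W) ^ D" using W1pos by (intro power_mono mult_le_mono2) (auto simp: W_def power2_eq_square)
    finally show ?thesis .
  qed
  have cZ: "card (Z i j H) \<le> (q * W) ^ 1" for i j H by (simp add: Z_def del: of_nat_mult)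
  show ?thesis unfolding W_def[symmetric] W1_def[symmetric]
    by (intro exI[of _ X] exI[of _ Y] exI[of _ Z] exI[of _ f] exI[of _ g] conjI allI code cX cY cZ)
qed



lemma card_supsets:
  assumes A: "finite A" and S: "S \<subseteq> A" and r: "card S \<le> r"
  shows "card {L. L \<subseteq> A \<and> card L = r \<and> S \<subseteq> L} = (card A - card S) choose (r - card S)"
proof -
  have finS: "finite S" using A S finite_subset by blast
  have bij: "bij_betw (\<lambda>L. L - S) {L. L \<subseteq> A \<and> card L = r \<and> S \<subseteq> L} {L'. L' \<subseteq> A - S \<and> card L' = r - card S}"
  proof (rule bij_betw_byWitness[where f'="\<lambda>L'. L' \<union> S"])
    show "\<forall>L\<in>{L. L \<subseteq> A \<and> card L = r \<and> S \<subseteq> L}. L - S \<union> S = L" by auto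
    show "\<forall>L'\<in>{L'. L' \<subseteq> A - S \<and> card L' = r - card S}. L' \<union> S - S = L'" by auto
    show "(\<lambda>L. L - S) ` {L. L \<subseteq> A \<and> card L = r \<and> S \<subseteq> L} \<subseteq> {L'. L' \<subseteq> A - S \<and> card L' = r - card S}"
    proof safe
      fix L x assume "L \<subseteq> A" "S \<subseteq> L"
      thus "card (L - S) = card L - card S" using A finite_subset by (intro card_Diff_subset) (auto intro: finite_subset[OF _ finS])
    qed auto
    show "(\<lambda>L'. L' \<union> S) ` {L'. L' \<subseteq> A - S \<and> card L' = r - card S} \<subseteq> {L. L \<subseteq> A \<and> card L = r \<and> S \<subseteq> L}"
    proof safe
      fix L' assume L': "L' \<subseteq> A - S"
      have "finite L'" using L' A finite_subset by blast
      moreover have "L' \<inter> S = {}" using L' by auto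
      ultimately show "card (L' \<union> S) = r" if "card L' = r - card S"
        using that r finS by (simp add: card_Un_disjoint)
    qed (use S in auto)
  qed
  have "card {L. L \<subseteq> A \<and> card L = r \<and> S \<subseteq> L} = card {L'. L' \<subseteq> A - S \<and> card L' = r - card S}"
    by (rule bij_betw_same_card[OF bij])
  also have "\<dots> = card (A - S) choose (r - card S)" using A by (intro n_subsets) auto
  also have "card (A - S) = card A - card S" using S finS by (simp add: card_Diff_subset)
  finally show ?thesis .
qed



lemma card_inter_ge:
  assumes "finite L" "L - B \<subseteq> C" "finite C"
  shows "card L \<le> card (L \<inter> B) + card C"
proof -
  have "L = (L \<inter> B) \<union> (L - B)" by auto
  hence "card L \<le> card (L \<inter> B) + card (L - B)" by (metis card_Un_le)
  also have "card (L - B) \<le> card C" using assms by (intro card_mono) auto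
  finally show ?thesis by simp
qed

lemma layered_family:
  assumes KD: "K \<le> D" and DN: "D < N" and r2: "2 \<le> r" and rN: "r \<le> N" and R: "R = r - (N - K)" and R1: "R \<ge> 1"
  shows "\<exists>(X::(nat set\<times>nat \<Rightarrow> int) set) (Y::nat \<Rightarrow> (nat set \<Rightarrow> int) set) (Z::nat \<Rightarrow> nat \<Rightarrow> nat set \<Rightarrow> (nat set \<Rightarrow> int) set) f g.
        abs_code N K D X Y Z f g \<and> card X = q ^ (R * (N choose r)) \<and>
        (\<forall>i. card (Y i) \<le> (q * ((R+1)*(N+1)^R)) ^ ((N-1) choose (r-1))) \<and>
        (\<forall>i j H. card (Z i j H) \<le> (q * ((R+1)*(N+1)^R)) ^ ((N-2) choose (r-2)))"
proof (cases "q = 0")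
  case True
  define X :: "(nat set\<times>nat \<Rightarrow> int) set" where "X = {}"
  have "abs_code N K D X (\<lambda>_. {}) (\<lambda>_ _ _. {}) (\<lambda>_ _. undefined) (\<lambda>_ _ _ _. undefined)"
    by (simp add: abs_code_def X_def)
  moreover have "card X = q ^ (R * (N choose r))"
  proof -
    have "(N choose r) > 0" using rN by simp
    hence "R * (N choose r) > 0" using R1 by simp
    thus ?thesis using True by (simp add: X_def)
  qed
  ultimately show ?thesis by fastforce
next
  case False
  hence q: "q \<ge> 1" by simp
  define W where "W = (R+1)*(N+1)^R"
  have "0 < W" unfolding W_def by simp
  hence W1: "W \<ge> 1" by simp
  have qW: "q * W \<ge> 1" using q W1 by simp
  define Ls where "Ls = {L. L \<subseteq> {..<N} \<and> card L = r}"
  define X :: "(nat set\<times>nat \<Rightarrow> int) set" where "X = (\<Pi>\<^sub>E p\<in>Ls \<times> {..<R}. {0..<int q})"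
  define xp :: "nat \<Rightarrow> int" where "xp i = int i + 1" for i
  define ev where "ev v L i = (\<Sum>a<R. v (L,a) * xp i ^ a)" for v :: "nat set\<times>nat \<Rightarrow> int" and L i
  define f :: "nat \<Rightarrow> (nat set\<times>nat \<Rightarrow> int) \<Rightarrow> (nat set \<Rightarrow> int)" where
    "f i v = (\<lambda>L\<in>{L\<in>Ls. i \<in> L}. ev v L i)" for i v
  define g :: "nat \<Rightarrow> nat \<Rightarrow> nat set \<Rightarrow> (nat set \<Rightarrow> int) \<Rightarrow> (nat set \<Rightarrow> int)" where
    "g h j H w = restrict w {L\<in>Ls. h \<in> L \<and> j \<in> L \<and> h \<noteq> j}" for h j H w
  define Y :: "nat \<Rightarrow> (nat set \<Rightarrow> int) set" where "Y i = (\<Pi>\<^sub>E L\<in>{L\<in>Ls. i \<in> L}. {0..<int (q*W)})" for i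
  define Z :: "nat \<Rightarrow> nat \<Rightarrow> nat set \<Rightarrow> (nat set \<Rightarrow> int) set" where
    "Z h j H = (\<Pi>\<^sub>E L\<in>{L\<in>Ls. h \<in> L \<and> j \<in> L \<and> h \<noteq> j}. {0..<int (q*W)})" for h j H
  have finLs: "finite Ls"
  proof -
    have "Ls \<subseteq> Pow {..<N}" by (auto simp: Ls_def)
    thus ?thesis by (rule finite_subset) simp
  qed
  have Lfin: "L \<in> Ls \<Longrightarrow> finite L" for L using finite_subset by (auto simp: Ls_def)
  have eqW: "int (q*W) = int q * ((int R + 1) * (int N + 1)^R)" by (simp add: W_def algebra_simps)
  have ev_bound: "0 \<le> ev v L i \<and> ev v L i < int (q*W)" if v: "v \<in> X" and L: "L \<in> Ls" and i: "i < N" for v L i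
  proof -
    have "0 \<le> (\<Sum>a<R. v (L,a) * xp i ^ a) \<and> (\<Sum>a<R. v (L,a) * xp i ^ a) < int q * ((int R + 1) * (int N + 1)^R)"
    proof (rule sum_pow_bound)
      show "\<And>a. a < R \<Longrightarrow> 0 \<le> v (L, a) \<and> v (L, a) < int q" using v L by (auto simp: X_def PiE_iff)
    qed (use q i in \<open>auto simp: xp_def\<close>)
    thus ?thesis unfolding ev_def by (simp only: eqW)
  qed
  have fY: "f i x \<in> Y i" if "i < N" "x \<in> X" for i x
    using ev_bound[OF that(2) _ that(1)] by (auto simp: f_def Y_def)
  have gZ: "g i j H w \<in> Z i j H" if "w \<in> Y i" for i j H w
    using that by (auto simp: g_def Z_def Y_def PiE_iff)
  have recon: "v = v'" if K: "Ks \<subseteq> {..<N}" "card Ks = K" and v: "v \<in> X" "v' \<in> X"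
    and eq: "\<forall>i\<in>Ks. f i v = f i v'" for Ks v v'
  proof (rule extensionalityI)
    show "v \<in> extensional (Ls \<times> {..<R})" "v' \<in> extensional (Ls \<times> {..<R})" using v by (auto simp: X_def PiE_iff)
    fix p assume p: "p \<in> Ls \<times> {..<R}"
    obtain L a where La: "p = (L,a)" "L \<in> Ls" "a < R" using p by auto
    have finL: "finite L" using Lfin[OF La(2)] .
    have "card L \<le> card (L \<inter> Ks) + card ({..<N} - Ks)"
      by (rule card_inter_ge) (use finL La(2) in \<open>auto simp: Ls_def\<close>)
    moreover have "card ({..<N} - Ks) = N - K"
    proof -
      have "finite Ks" using K(1) finite_subset by blast
      thus ?thesis using K by (simp add: card_Diff_subset)
    qed
    moreover have "card L = r" using La(2) by (simp add: Ls_def)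
    ultimately have cLK: "R \<le> card (L \<inter> Ks)" using R by simp
    have "\<forall>a<R. v (L,a) = v' (L,a)"
    proof (rule poly_unique[of "xp ` (L \<inter> Ks)"])
      show "finite (xp ` (L \<inter> Ks))" using finL by simp
      show "R \<le> card (xp ` (L \<inter> Ks))" using cLK card_xp[of "L \<inter> Ks"] by (simp add: xp_def)
      fix x assume "x \<in> xp ` (L \<inter> Ks)"
      then obtain i where i: "i \<in> L" "i \<in> Ks" "x = xp i" by auto
      have "f i v L = f i v' L" using eq i(2) by simp
      thus "(\<Sum>a<R. v (L,a) * x ^ a) = (\<Sum>a<R. v' (L,a) * x ^ a)"
        using i La(2) by (simp add: f_def ev_def)
    qed
    thus "v p = v' p" using La by simp
  qed
  have repair: "f j v = f j v'" if j: "j < N" and H: "H \<subseteq> {..<N} - {j}" "card H = D"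
    and v: "v \<in> X" "v' \<in> X" and eq: "\<forall>i\<in>H. g i j H (f i v) = g i j H (f i v')" for j H v v'
    unfolding f_def
  proof (rule restrict_ext)
    fix L assume L: "L \<in> {L\<in>Ls. j \<in> L}"
    have finL: "finite L" using Lfin L by blast
    have "card (L - {j}) \<le> card ((L - {j}) \<inter> H) + card (({..<N} - {j}) - H)"
      by (rule card_inter_ge) (use finL L in \<open>auto simp: Ls_def\<close>)
    moreover have "card (({..<N} - {j}) - H) = (N - 1) - D"
    proof -
      have "finite H" using H(1) finite_subset by blast
      thus ?thesis using H j by (simp add: card_Diff_subset)
    qed
    moreover have "card (L - {j}) = r - 1" using L by (simp add: Ls_def)
    ultimately have cLH: "R \<le> card ((L - {j}) \<inter> H)" using R KD DN r2 by simp
    have "\<forall>a<R. v (L,a) = v' (L,a)"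
    proof (rule poly_unique[of "xp ` ((L - {j}) \<inter> H)"])
      show "finite (xp ` ((L - {j}) \<inter> H))" using finL by simp
      show "R \<le> card (xp ` ((L - {j}) \<inter> H))" using cLH card_xp[of "(L - {j}) \<inter> H"] by (simp add: xp_def)
      fix x assume "x \<in> xp ` ((L - {j}) \<inter> H)"
      then obtain i where i: "i \<in> L" "i \<noteq> j" "i \<in> H" "x = xp i" by auto
      have "g i j H (f i v) L = g i j H (f i v') L" using eq i(3) by simp
      thus "(\<Sum>a<R. v (L,a) * x ^ a) = (\<Sum>a<R. v' (L,a) * x ^ a)"
        using i L by (simp add: f_def g_def ev_def)
    qed
    thus "ev v L j = ev v' L j" by (simp add: ev_def)
  qed
  have code: "abs_code N K D X Y Z f g"
  proof (rule abs_codeI)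
    show "finite X" using finLs by (simp add: X_def finite_PiE)
    show "finite (Y i)" for i using finLs by (simp add: Y_def finite_PiE)
    show "finite (Z i j H)" for i j H using finLs by (simp add: Z_def finite_PiE)
  qed (fact fY, rule gZ, assumption, fact recon, fact repair)
  have cLs: "card Ls = N choose r" unfolding Ls_def by (subst n_subsets) auto
  have cX: "card X = q ^ (R * (N choose r))"
    using finLs cLs by (simp add: X_def card_PiE card_cartesian_product mult.commute)
  have cY: "card (Y i) \<le> (q * W) ^ ((N-1) choose (r-1))" for i
  proof -
    have "card (Y i) = (q*W) ^ card {L\<in>Ls. i \<in> L}" using finLs by (simp add: Y_def card_PiE del: of_nat_mult)
    also have "card {L\<in>Ls. i \<in> L} \<le> (N-1) choose (r-1)"
    proof (cases "i < N")
      case True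
      have "{L\<in>Ls. i \<in> L} = {L. L \<subseteq> {..<N} \<and> card L = r \<and> {i} \<subseteq> L}" by (auto simp: Ls_def)
      also have "card \<dots> = (N-1) choose (r-1)" using True r2 by (subst card_supsets) auto
      finally show ?thesis by simp
    next
      case False
      hence "{L\<in>Ls. i \<in> L} = {}" by (auto simp: Ls_def)
      thus ?thesis by (metis card.empty zero_le)
    qed
    hence "(q*W) ^ card {L\<in>Ls. i \<in> L} \<le> (q*W) ^ ((N-1) choose (r-1))" using qW by (intro power_increasing) auto
    finally show ?thesis .
  qed
  have cZ: "card (Z h j H) \<le> (q * W) ^ ((N-2) choose (r-2))" for h j H
  proof -
    have "card (Z h j H) = (q*W) ^ card {L\<in>Ls. h \<in> L \<and> j \<in> L \<and> h \<noteq> j}" using finLs by (simp add: Z_def card_PiE del: of_nat_mult)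
    also have "card {L\<in>Ls. h \<in> L \<and> j \<in> L \<and> h \<noteq> j} \<le> (N-2) choose (r-2)"
    proof (cases "h < N \<and> j < N \<and> h \<noteq> j")
      case True
      have "{L\<in>Ls. h \<in> L \<and> j \<in> L \<and> h \<noteq> j} = {L. L \<subseteq> {..<N} \<and> card L = r \<and> {h,j} \<subseteq> L}" using True by (auto simp: Ls_def)
      also have "card \<dots> = (N-2) choose (r-2)" using True r2 by (subst card_supsets) (auto simp: numeral_2_eq_2)
      finally show ?thesis by simp
    next
      case False
      hence "{L\<in>Ls. h \<in> L \<and> j \<in> L \<and> h \<noteq> j} = {}" by (auto simp: Ls_def)
      thus ?thesis by (metis card.empty zero_le)
    qed
    hence "(q*W) ^ card {L\<in>Ls. h \<in> L \<and> j \<in> L \<and> h \<noteq> j} \<le> (q*W) ^ ((N-2) choose (r-2))" using qW by (intro power_increasing) auto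
    finally show ?thesis .
  qed
  show ?thesis unfolding W_def[symmetric]
    by (intro exI[of _ X] exI[of _ Y] exI[of _ Z] exI[of _ f] exI[of _ g] conjI allI code cX cY cZ)
qed



lemma C_func_bounds:
  assumes K1: "1 \<le> K" and KD: "K \<le> D" and a: "\<alpha> > 0" and g: "\<gamma> \<ge> \<alpha>"
  shows "\<alpha> \<le> C_func K D \<alpha> \<gamma>" "C_func K D \<alpha> \<gamma> \<le> real K * \<alpha>"
proof -
  have D0: "D > 0" using K1 KD by simp
  have nn: "0 \<le> min \<alpha> ((real D - real j) / real D * \<gamma>)" if "j < K" for j
    using that KD a g D0 by (intro min.boundedI) auto
  have e1: "C_func K D \<alpha> \<gamma> = min \<alpha> ((real D - real 0) / real D * \<gamma>) + (\<Sum>j\<in>{..<K} - {0}. min \<alpha> ((real D - real j) / real D * \<gamma>))"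
    unfolding C_func_def using K1 by (subst sum.remove[of _ 0]) auto
  have e2: "min \<alpha> ((real D - real 0) / real D * \<gamma>) = \<alpha>" using D0 g by simp
  have e3: "(\<Sum>j\<in>{..<K} - {0}. min \<alpha> ((real D - real j) / real D * \<gamma>)) \<ge> 0"
    using nn by (intro sum_nonneg) auto
  show "\<alpha> \<le> C_func K D \<alpha> \<gamma>" using e1 e2 e3 by linarith
  have "C_func K D \<alpha> \<gamma> \<le> (\<Sum>j<K. \<alpha>)" unfolding C_func_def by (intro sum_mono) auto
  thus "C_func K D \<alpha> \<gamma> \<le> real K * \<alpha>" by simp
qed

lemma mbr_case:
  assumes K1: "1 \<le> K" and KD: "K \<le> D" and DN: "D < N" and a: "\<alpha> > 0"
  shows "C_func K D \<alpha> \<alpha> \<le> C_exact N K D \<alpha> \<alpha>"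
proof -
  have D0: "D > 0" using K1 KD by simp
  define Fu where "Fu = (\<Sum>j<K. D - j)"
  have W2: "2 \<le> ((D+1)*(N+1)^D)^2"
  proof -
    have "2 * 1 \<le> (D+1)*(N+1)^D" using D0 by (intro mult_le_mono one_le_power) auto
    hence "2 \<le> (D+1)*(N+1)^D" by simp
    hence "2 * 1 \<le> ((D+1)*(N+1)^D) * ((D+1)*(N+1)^D)" by (intro mult_le_mono) auto
    thus "2 \<le> ((D+1)*(N+1)^D)^2" by (simp add: power2_eq_square)
  qed
  have ineq: "real D * real (1::nat) * \<alpha> \<le> \<alpha> * real D" by simp
  have fam: "\<And>q::nat. 2 \<le> q \<Longrightarrow> \<exists>(X::(nat\<times>nat \<Rightarrow> int) set) (Y::nat \<Rightarrow> (nat \<Rightarrow> int) set) (Z::nat \<Rightarrow> nat \<Rightarrow> nat set \<Rightarrow> int set) f g.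
        abs_code N K D X Y Z f g \<and> card X = q ^ Fu \<and>
        (\<forall>i. card (Y i) \<le> (q * ((D+1)*(N+1)^D)^2) ^ D) \<and>
        (\<forall>i j H. card (Z i j H) \<le> (q * ((D+1)*(N+1)^D)^2) ^ 1)"
    unfolding Fu_def by (rule mbr_family[OF K1 KD DN])
  have "\<alpha> * real Fu / real D \<le> C_exact N K D \<alpha> \<alpha>"
    by (rule lower_from_family[OF KD DN K1 a _ D0 W2 ineq fam]) (use a in simp)
  moreover have "C_func K D \<alpha> \<alpha> = \<alpha> * real Fu / real D"
  proof -
    have "C_func K D \<alpha> \<alpha> = (\<Sum>j<K. (real D - real j) / real D * \<alpha>)"
      unfolding C_func_def
    proof (intro sum.cong refl)
      fix j assume "j \<in> {..<K}"
      hence "(real D - real j) / real D \<le> 1" using D0 by simp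
      hence "(real D - real j) / real D * \<alpha> \<le> 1 * \<alpha>" using a by (intro mult_right_mono) auto
      hence "(real D - real j) / real D * \<alpha> \<le> \<alpha>" by simp
      thus "min \<alpha> ((real D - real j) / real D * \<alpha>) = (real D - real j) / real D * \<alpha>" by simp
    qed
    also have "\<dots> = \<alpha> * (\<Sum>j<K. (real D - real j)) / real D"
      by (simp add: sum_distrib_left sum_divide_distrib algebra_simps)
    also have "(\<Sum>j<K. (real D - real j)) = real Fu"
      unfolding Fu_def of_nat_sum using KD by (intro sum.cong refl) (simp add: of_nat_diff)
    finally show ?thesis .
  qed
  ultimately show ?thesis by simp
qed

lemma layered_case:
  assumes K1: "1 \<le> K" and KD: "K \<le> D" and DN: "D < N" and a: "\<alpha> > 0" and g: "\<gamma> \<ge> 0"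
    and r2: "2 \<le> r" and rN: "r \<le> N" and ru: "N - K < r"
    and ineq: "real D * real (r - 1) * \<alpha> \<le> \<gamma> * real (N - 1)"
  shows "\<alpha> * real (r - (N - K)) * real N / real r \<le> C_exact N K D \<alpha> \<gamma>"
proof -
  define R where "R = r - (N - K)"
  have R1: "R \<ge> 1" using ru by (simp add: R_def)
  define Au where "Au = (N-1) choose (r-1)"
  define Bu where "Bu = (N-2) choose (r-2)"
  have Au0: "Au > 0" using rN r2 by (simp add: Au_def)
  have bin1: "real r * real (N choose r) = real N * real Au"
    using times_binomial_minus1_eq[of r N] r2 unfolding Au_def by (metis of_nat_mult not_numeral_le_zero not_gr0)
  have bin2: "real (r - 1) * real Au = real (N - 1) * real Bu"
  proof -
    have "(r - 1) * ((N-1) choose (r-1)) = (N-1) * ((N - 1 - 1) choose (r - 1 - 1))"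
      using r2 by (intro times_binomial_minus1_eq) simp
    thus ?thesis unfolding Au_def Bu_def by (metis of_nat_mult diff_diff_left one_add_one)
  qed
  have N1: "real (N - 1) > 0" using DN K1 KD by simp
  have W2: "2 \<le> (R+1)*(N+1)^R"
  proof -
    have "2 * 1 \<le> (R+1)*(N+1)^R" using R1 by (intro mult_le_mono one_le_power) auto
    thus ?thesis by simp
  qed
  have ineq': "real D * real Bu * \<alpha> \<le> \<gamma> * real Au"
  proof -
    have "real D * real Bu * \<alpha> * real (N - 1) = real D * (real (r - 1) * real Au) * \<alpha>"
      using bin2 by (simp add: algebra_simps)
    also have "\<dots> = (real D * real (r - 1) * \<alpha>) * real Au" by (simp add: algebra_simps)
    also have "\<dots> \<le> (\<gamma> * real (N - 1)) * real Au" using ineq by (intro mult_right_mono) auto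
    also have "\<dots> = (\<gamma> * real Au) * real (N - 1)" by (simp add: ac_simps)
    finally show "real D * real Bu * \<alpha> \<le> \<gamma> * real Au"
      using N1 by (rule mult_right_le_imp_le)
  qed
  have fam: "\<And>q::nat. 2 \<le> q \<Longrightarrow> \<exists>(X::(nat set\<times>nat \<Rightarrow> int) set) (Y::nat \<Rightarrow> (nat set \<Rightarrow> int) set) (Z::nat \<Rightarrow> nat \<Rightarrow> nat set \<Rightarrow> (nat set \<Rightarrow> int) set) f g.
        abs_code N K D X Y Z f g \<and> card X = q ^ (R * (N choose r)) \<and>
        (\<forall>i. card (Y i) \<le> (q * ((R+1)*(N+1)^R)) ^ Au) \<and>
        (\<forall>i j H. card (Z i j H) \<le> (q * ((R+1)*(N+1)^R)) ^ Bu)"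
    unfolding Au_def Bu_def by (rule layered_family[OF KD DN r2 rN R_def R1])
  have "\<alpha> * real (R * (N choose r)) / real Au \<le> C_exact N K D \<alpha> \<gamma>"
    by (rule lower_from_family[OF KD DN K1 a g Au0 W2 ineq' fam])
  moreover have "\<alpha> * real (R * (N choose r)) / real Au = \<alpha> * real R * real N / real r"
  proof -
    have r0: "real r > 0" using r2 by simp
    have "\<alpha> * real (R * (N choose r)) / real Au = \<alpha> * real R * (real r * real (N choose r)) / (real r * real Au)"
      using r0 by (simp add: field_simps)
    also have "\<dots> = \<alpha> * real R * real N / real r" using bin1 Au0 by (simp add: field_simps)
    finally show ?thesis .
  qed
  ultimately show ?thesis by (simp add: R_def)
qed



lemma gamma_ge:
  assumes K1: "1 \<le> K" and KD: "K \<le> D" and a: "\<alpha> > 0" and s: "0 \<le> s" "s \<le> 1"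
    and \<delta>: "\<delta>1 = real (D - K) + 1"
  shows "\<alpha> \<le> s * (real D * \<alpha> / \<delta>1) + (1 - s) * \<alpha>"
proof -
  have d1: "\<delta>1 > 0" using \<delta> by simp
  have "\<delta>1 \<le> real D" using \<delta> K1 KD by (simp add: of_nat_diff)
  hence "\<delta>1 * \<alpha> \<le> real D * \<alpha>" using a by (intro mult_right_mono) auto
  hence "\<alpha> \<le> real D * \<alpha> / \<delta>1" using d1 by (simp add: le_divide_eq mult.commute)
  hence "s * \<alpha> \<le> s * (real D * \<alpha> / \<delta>1)" using s by (intro mult_left_mono) auto
  thus ?thesis by (simp add: algebra_simps)
qed

lemma pos_case_bound:
  assumes K1: "1 \<le> K" and KD: "K \<le> D" and DN: "D < N" and a: "\<alpha> > 0" and s: "0 < s" "s \<le> 1"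
    and \<delta>: "\<delta>1 = real (D - K) + 1" and g: "\<gamma> = s * (real D * \<alpha> / \<delta>1) + (1 - s) * \<alpha>"
    and big: "(real (N - K) + 1) * \<delta>1 \<le> s * (real N - 1)"
  shows "1 - real (N - K) * \<delta>1 / (s * (real N - 1)) \<le> C_exact N K D \<alpha> \<gamma> / C_func K D \<alpha> \<gamma>"
proof -
  define u where "u = N - K"
  have d1: "\<delta>1 \<ge> 1" using \<delta> by simp
  have N1: "real N - 1 > 0" using DN K1 KD by simp
  have gea: "\<alpha> \<le> \<gamma>" unfolding g using gamma_ge[OF K1 KD a _ s(2) \<delta>] s by simp
  define x where "x = s * (real N - 1) / \<delta>1"
  have xu: "real u + 1 \<le> x" using big d1 unfolding x_def u_def by (simp add: le_divide_eq)
  have xN: "x \<le> real N - 1"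
  proof -
    have "s * (real N - 1) \<le> 1 * (real N - 1)" using s N1 by (intro mult_right_mono) auto
    also have "\<dots> \<le> \<delta>1 * (real N - 1)" using d1 N1 by (intro mult_right_mono) auto
    finally show ?thesis using d1 unfolding x_def by (simp add: divide_le_eq mult.commute)
  qed
  define r where "r = nat \<lfloor>x\<rfloor> + 1"
  have x0: "x > 0" using xu by linarith
  have fx: "real (nat \<lfloor>x\<rfloor>) = real_of_int \<lfloor>x\<rfloor>" using x0 by (intro of_nat_nat) simp
  have fl: "real (nat \<lfloor>x\<rfloor>) \<le> x" "x < real (nat \<lfloor>x\<rfloor>) + 1"
    using fx of_int_floor_le[of x] real_of_int_floor_add_one_gt[of x] by linarith+
  have rx: "x < real r" unfolding r_def of_nat_add of_nat_1 using fl(2) by linarith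
  have r2: "2 \<le> r"
  proof -
    have "real 1 < real r" using rx xu by simp
    hence "1 < r" by (simp only: of_nat_less_iff)
    thus ?thesis by simp
  qed
  have ru: "u < r" using rx xu by simp
  have rN: "r \<le> N"
  proof -
    have "real (nat \<lfloor>x\<rfloor>) \<le> real N - 1" using fl xN by linarith
    hence "real (nat \<lfloor>x\<rfloor>) \<le> real (N - 1)" using N1 by (simp add: of_nat_diff)
    hence "nat \<lfloor>x\<rfloor> \<le> N - 1" by (simp only: of_nat_le_iff)
    thus ?thesis using N1 by (simp add: r_def)
  qed
  have ineq: "real D * real (r - 1) * \<alpha> \<le> \<gamma> * real (N - 1)"
  proof -
    have "real D * real (r - 1) * \<alpha> \<le> real D * x * \<alpha>"
      using fl a by (intro mult_right_mono mult_left_mono) (auto simp: r_def)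
    also have "\<dots> = (s * (real D * \<alpha> / \<delta>1)) * (real N - 1)" using d1 by (simp add: x_def field_simps)
    also have "\<dots> \<le> \<gamma> * (real N - 1)"
    proof (rule mult_right_mono)
      show "s * (real D * \<alpha> / \<delta>1) \<le> \<gamma>" unfolding g using s a by simp
    qed (use N1 in simp)
    also have "real N - 1 = real (N - 1)" using N1 by (simp add: of_nat_diff)
    finally show ?thesis .
  qed
  have Ce: "\<alpha> * real (r - u) * real N / real r \<le> C_exact N K D \<alpha> \<gamma>"
    unfolding u_def by (rule layered_case[OF K1 KD DN a _ r2 rN _ ineq]) (use gea a ru u_def in auto)
  have Cf: "\<alpha> \<le> C_func K D \<alpha> \<gamma>" "C_func K D \<alpha> \<gamma> \<le> real K * \<alpha>"
    using C_func_bounds[OF K1 KD a gea] by auto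
  have r0: "real r > 0" using r2 by simp
  have K0: "real K > 0" using K1 by simp
  have ru': "real (r - u) = real r - real u" using ru by (simp add: of_nat_diff)
  have nn: "0 \<le> (real r - real u) / real r" using ru r0 by simp
  have "(real r - real u) / real r \<le> ((real r - real u) / real r) * (real N / real K)"
  proof -
    have "1 \<le> real N / real K" using K0 KD DN by simp
    thus ?thesis using nn by (metis mult_left_mono mult.right_neutral)
  qed
  also have "\<dots> = (\<alpha> * real (r - u) * real N / real r) / (real K * \<alpha>)"
    using a K0 r0 ru' by (simp add: field_simps)
  also have "\<dots> \<le> C_exact N K D \<alpha> \<gamma> / (real K * \<alpha>)"
    using Ce K0 a by (intro divide_right_mono) auto
  also have "\<dots> \<le> C_exact N K D \<alpha> \<gamma> / C_func K D \<alpha> \<gamma>"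
  proof (rule divide_left_mono)
    show "0 \<le> C_exact N K D \<alpha> \<gamma>" using Ce nn a N1 ru' r0
      by (smt (verit) divide_nonneg_pos mult_nonneg_nonneg of_nat_0_le_iff)
    show "C_func K D \<alpha> \<gamma> \<le> real K * \<alpha>" by (rule Cf(2))
    show "0 < real K * \<alpha> * C_func K D \<alpha> \<gamma>" using K0 a Cf(1) by simp
  qed
  finally have lo: "(real r - real u) / real r \<le> C_exact N K D \<alpha> \<gamma> / C_func K D \<alpha> \<gamma>" .
  have "1 - real u * \<delta>1 / (s * (real N - 1)) = 1 - real u / x"
    using d1 s N1 by (simp add: x_def field_simps)
  also have "\<dots> \<le> 1 - real u / real r"
    using x0 rx by (simp add: divide_left_mono frac_le)
  also have "\<dots> = (real r - real u) / real r" using r0 by (simp add: field_simps)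
  finally show ?thesis using lo unfolding u_def by linarith
qed



theorem theorem5p2:
  fixes n k d :: nat and \<alpha> s :: real
  assumes "1 \<le> k" "k \<le> d" "d < n" "\<alpha> > 0" "0 \<le> s" "s \<le> 1"
  shows "(\<lambda>M::nat.
            let \<gamma>MSR = real (d + M) * \<alpha> / (real (d + M) - real (k + M) + 1);
                \<gamma>MBR = \<alpha>;
                \<gamma> = s * \<gamma>MSR + (1 - s) * \<gamma>MBR
            in C_exact (n + M) (k + M) (d + M) \<alpha> \<gamma> / C_func (k + M) (d + M) \<alpha> \<gamma>)
         \<longlonglongrightarrow> 1"
proof -
  note k1 = assms(1) and kd = assms(2) and dn = assms(3) and a = assms(4) and s0 = assms(5) and s1 = assms(6)
  define \<delta>1 where "\<delta>1 = real (d - k) + 1"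
  define \<gamma> where "\<gamma> M = s * (real (d + M) * \<alpha> / \<delta>1) + (1 - s) * \<alpha>" for M
  define ratio where "ratio M = C_exact (n + M) (k + M) (d + M) \<alpha> (\<gamma> M) / C_func (k + M) (d + M) \<alpha> (\<gamma> M)" for M
  have den: "real (d + M) - real (k + M) + 1 = \<delta>1" for M using kd by (simp add: \<delta>1_def of_nat_diff)
  have eq: "(\<lambda>M::nat.
            let \<gamma>MSR = real (d + M) * \<alpha> / (real (d + M) - real (k + M) + 1);
                \<gamma>MBR = \<alpha>;
                \<gamma> = s * \<gamma>MSR + (1 - s) * \<gamma>MBR
            in C_exact (n + M) (k + M) (d + M) \<alpha> \<gamma> / C_func (k + M) (d + M) \<alpha> \<gamma>) = ratio"
    unfolding Let_def ratio_def \<gamma>_def den ..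
  have dd: "(d + M) - (k + M) = d - k" for M by simp
  have \<delta>M: "\<delta>1 = real ((d + M) - (k + M)) + 1" for M by (simp only: dd \<delta>1_def)
  have K1: "1 \<le> k + M" and KD: "k + M \<le> d + M" and DN: "d + M < n + M" for M using k1 kd dn by auto
  have gea: "\<alpha> \<le> \<gamma> M" for M unfolding \<gamma>_def by (rule gamma_ge[OF K1 KD a s0 s1 \<delta>M])
  have Cf: "\<alpha> \<le> C_func (k + M) (d + M) \<alpha> (\<gamma> M)" for M using C_func_bounds[OF K1 KD a gea] by simp
  have le1: "ratio M \<le> 1" for M
  proof -
    have "C_exact (n + M) (k + M) (d + M) \<alpha> (\<gamma> M) \<le> C_func (k + M) (d + M) \<alpha> (\<gamma> M)"
      using C_exact_le[OF KD DN K1] a gea[of M] by simp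
    thus ?thesis using Cf[of M] a unfolding ratio_def by simp
  qed
  show ?thesis unfolding eq
  proof (cases "s = 0")
    case True
    have "ratio M = 1" for M
    proof -
      have g: "\<gamma> M = \<alpha>" using True by (simp add: \<gamma>_def)
      have "C_func (k + M) (d + M) \<alpha> \<alpha> \<le> C_exact (n + M) (k + M) (d + M) \<alpha> \<alpha>"
        by (rule mbr_case[OF K1 KD DN a])
      hence "1 \<le> ratio M" using Cf[of M] a g unfolding ratio_def by simp
      thus ?thesis using le1[of M] by simp
    qed
    hence "ratio = (\<lambda>_. 1)" by auto
    thus "ratio \<longlonglongrightarrow> 1" by simp
  next
    case False
    hence sp: "s > 0" using s0 by simp
    define u where "u = n - k"
    define l where "l M = 1 - real u * \<delta>1 / (s * (real (n + M) - 1))" for M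
    have lim: "l \<longlonglongrightarrow> 1"
    proof -
      have "(\<lambda>M. inverse (real (M + (n - 1)))) \<longlonglongrightarrow> 0"
        using LIMSEQ_ignore_initial_segment[OF lim_inverse_n, of "n - 1"] by simp
      hence "(\<lambda>M. (real u * \<delta>1 / s) * inverse (real (M + (n - 1)))) \<longlonglongrightarrow> 0"
        by (rule tendsto_mult_right_zero)
      hence "(\<lambda>M. 1 - (real u * \<delta>1 / s) * inverse (real (M + (n - 1)))) \<longlonglongrightarrow> 1 - 0"
        by (intro tendsto_diff tendsto_const)
      moreover have "l = (\<lambda>M. 1 - (real u * \<delta>1 / s) * inverse (real (M + (n - 1))))"
      proof (rule ext)
        fix M
        have "real (n + M) - 1 = real (M + (n - 1))" using dn by (simp add: of_nat_diff)
        thus "l M = 1 - (real u * \<delta>1 / s) * inverse (real (M + (n - 1)))" by (simp add: l_def divide_inverse)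
      qed
      ultimately show ?thesis by (simp only: diff_zero)
    qed
    have ev: "eventually (\<lambda>M. l M \<le> ratio M) sequentially"
    proof -
      define B where "B = (real u + 1) * \<delta>1 / s"
      have "\<forall>M\<ge>nat \<lceil>B\<rceil>. l M \<le> ratio M"
      proof (intro allI impI)
        fix M assume M: "M \<ge> nat \<lceil>B\<rceil>"
        have "B \<le> real M" using M by linarith
        moreover have "real M \<le> real (n + M) - 1" using dn by simp
        ultimately have "B \<le> real (n + M) - 1" by linarith
        hence "(real u + 1) * \<delta>1 \<le> s * (real (n + M) - 1)" using sp unfolding B_def by (simp add: divide_le_eq mult.commute)
        moreover have "(n + M) - (k + M) = u" by (simp add: u_def)
        ultimately have big: "(real ((n + M) - (k + M)) + 1) * \<delta>1 \<le> s * (real (n + M) - 1)" by simp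
        have "1 - real ((n + M) - (k + M)) * \<delta>1 / (s * (real (n + M) - 1)) \<le> ratio M"
          unfolding ratio_def by (rule pos_case_bound[OF K1 KD DN a sp s1 \<delta>M \<gamma>_def big])
        thus "l M \<le> ratio M" by (simp add: l_def u_def)
      qed
      thus ?thesis unfolding eventually_sequentially by blast
    qed
    show "ratio \<longlonglongrightarrow> 1"
      by (rule tendsto_sandwich[OF ev _ lim tendsto_const]) (use le1 in simp)
  qed
qed


end
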